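(* Let $\{\cdot,\cdot\}$ be an admissible Poisson bracket on $\widetilde J$. The following are equivalent: (1) there exist a nonzero admissible derivation $d$ of $\widetilde J$ and complex numbers $u,v$ such that, with $\kappa(k,p)=uk+vp$, one has $\{f,g\}=\kappa(k,p)f\,d(g)-\kappa(\ell,q)g\,d(f)$ for all $f\in\widetilde J_{k,p}$, $g\in\widetilde J_{\ell,q}$; (2) $\{\cdot,\cdot\}$ belongs to family (B), i.e. for some $\gamma,\lambda,\varepsilon\in\mathbb{C}$: $\{E_4,E_6\}=-2E_4^3+2E_6^2$, $\{A,E_4\}=(\varepsilon+\frac23)E_6A+\gamma E_4B$, $\{A,E_6\}=(\frac32\varepsilon+1)E_4^2A+\frac32\gamma E_6B$, $\{B,E_4\}=\lambda E_4^2A+\varepsilon E_6B$, $\{B,E_6\}=\frac32\lambda E_4E_6A+\frac32\varepsilon E_4^2B$, $\{A,B\}=(\frac34\varepsilon+\frac12)\lambda E_4A^2-\frac34\varepsilon\gamma B^2$. Moreover, in (1) necessarily $u\ne0$, $v=-3\varepsilon u$ (so $\kappa(k,p)=u(k-3\varepsilon p)$), and $d$ is given by $d(E_4)=-\frac1{3u}E_6$, $d(E_6)=-\frac1{2u}E_4^2$, $d(A)=-\frac\gamma{4u}B$, $d(B)=-\frac{\lambda}{4u}E_4A$; conversely, if (2) holds then for every $u\ne0$ the function $\kappa(k,p)=u(k-3\varepsilon p)$ and this derivation $d$ satisfy the identity in (1).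
   Context: Let $\widetilde J=\mathbb{C}[E_4,E_6,A,B]$ be the polynomial algebra in four algebraically independent variables, bigraded by weight and index, where $E_4$ has weight $4$ and index $0$, $E_6$ has weight $6$ and index $0$, $A$ has weight $-2$ and index $1$, $B$ has weight $0$ and index $1$; $\widetilde J_{k,p}$ denotes the homogeneous component of weight $k$ and index $p$. $\mathcal M_*=\mathbb{C}[E_4,E_6]$ with weight-$k$ part $\mathcal M_k$. The Serre derivation $S$ of $\mathcal M_*$ has $S(E_4)=-\frac13E_6$, $S(E_6)=-\frac12E_4^2$, and $\mathrm{RC}_1(f,g)=kfS(g)-\ell gS(f)$ for $f\in\mathcal M_k$, $g\in\mathcal M_\ell$. A Poisson bracket on $\widetilde J$ is admissible if (1) $\{f,g\}=\mathrm{RC}_1(f,g)$ for all $f,g\in\mathcal M_*$ and (2) $\{\widetilde J_{k,p},\widetilde J_{\ell,q}\}\subset\widetilde J_{k+\ell+2,p+q}$ for all weights and indices. A derivation of $\widetilde J$ is admissible if it maps each $\widetilde J_{k,p}$ into $\widetilde J_{k+2,p}$. *)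

theory Defs
  imports Complex_Main "HOL-Library.Poly_Mapping"
begin

datatype jvar = vE4 | vE6 | vA | vB

text \<open>Polynomials in the four variables: finitely supported maps from monomials
  (exponent vectors) to complex coefficients, with convolution product.\<close>
type_synonym jpoly = "(jvar \<Rightarrow>\<^sub>0 nat) \<Rightarrow>\<^sub>0 complex"

definition jconst :: "complex \<Rightarrow> jpoly" where
  "jconst c = Poly_Mapping.single 0 c"

definition jvarp :: "jvar \<Rightarrow> jpoly" where
  "jvarp x = Poly_Mapping.single (Poly_Mapping.single x 1) 1"

abbreviation "E4 \<equiv> jvarp vE4"
abbreviation "E6 \<equiv> jvarp vE6"
abbreviation "A \<equiv> jvarp vA"
abbreviation "B \<equiv> jvarp vB"

definition mweight :: "(jvar \<Rightarrow>\<^sub>0 nat) \<Rightarrow> int" where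
  "mweight m = 4 * int (Poly_Mapping.lookup m vE4) + 6 * int (Poly_Mapping.lookup m vE6) - 2 * int (Poly_Mapping.lookup m vA)"

definition mindex :: "(jvar \<Rightarrow>\<^sub>0 nat) \<Rightarrow> nat" where
  "mindex m = Poly_Mapping.lookup m vA + Poly_Mapping.lookup m vB"

text \<open>Homogeneous component of weight k and index p.  For p = 0 this is M_k.\<close>
definition Jhom :: "int \<Rightarrow> nat \<Rightarrow> jpoly set" where
  "Jhom k p = {f. \<forall>m\<in>Poly_Mapping.keys f. mweight m = k \<and> mindex m = p}"

definition pderivj :: "jvar \<Rightarrow> jpoly \<Rightarrow> jpoly" where
  "pderivj x f = (\<Sum>m\<in>Poly_Mapping.keys f. Poly_Mapping.single (m - Poly_Mapping.single x 1)
                                  (of_nat (Poly_Mapping.lookup m x) * Poly_Mapping.lookup f m))"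

definition serre :: "jpoly \<Rightarrow> jpoly" where
  "serre f = jconst (-1/3) * E6 * pderivj vE4 f + jconst (-1/2) * E4^2 * pderivj vE6 f"

definition RC1 :: "int \<Rightarrow> jpoly \<Rightarrow> int \<Rightarrow> jpoly \<Rightarrow> jpoly" where
  "RC1 k f l g = jconst (of_int k) * f * serre g - jconst (of_int l) * g * serre f"

definition poisson_bracket :: "(jpoly \<Rightarrow> jpoly \<Rightarrow> jpoly) \<Rightarrow> bool" where
  "poisson_bracket br \<longleftrightarrow>
     (\<forall>f g h. br (f + g) h = br f h + br g h) \<and>
     (\<forall>c f g. br (jconst c * f) g = jconst c * br f g) \<and>
     (\<forall>f g. br f g = - br g f) \<and>
     (\<forall>f g h. br f (g * h) = br f g * h + g * br f h) \<and>
     (\<forall>f g h. br f (br g h) + br g (br h f) + br h (br f g) = 0)"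

definition admissible_pb :: "(jpoly \<Rightarrow> jpoly \<Rightarrow> jpoly) \<Rightarrow> bool" where
  "admissible_pb br \<longleftrightarrow> poisson_bracket br \<and>
     (\<forall>k l f g. f \<in> Jhom k 0 \<longrightarrow> g \<in> Jhom l 0 \<longrightarrow> br f g = RC1 k f l g) \<and>
     (\<forall>k p l q f g. f \<in> Jhom k p \<longrightarrow> g \<in> Jhom l q \<longrightarrow> br f g \<in> Jhom (k + l + 2) (p + q))"

definition derivation :: "(jpoly \<Rightarrow> jpoly) \<Rightarrow> bool" where
  "derivation d \<longleftrightarrow>
     (\<forall>f g. d (f + g) = d f + d g) \<and>
     (\<forall>c f. d (jconst c * f) = jconst c * d f) \<and>
     (\<forall>f g. d (f * g) = f * d g + g * d f)"

definition admissible_derivation :: "(jpoly \<Rightarrow> jpoly) \<Rightarrow> bool" where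
  "admissible_derivation d \<longleftrightarrow> derivation d \<and>
     (\<forall>k p f. f \<in> Jhom k p \<longrightarrow> d f \<in> Jhom (k + 2) p)"

definition kappa_identity ::
  "(jpoly \<Rightarrow> jpoly \<Rightarrow> jpoly) \<Rightarrow> (jpoly \<Rightarrow> jpoly) \<Rightarrow> complex \<Rightarrow> complex \<Rightarrow> bool" where
  "kappa_identity br d u v \<longleftrightarrow>
     (\<forall>k p l q f g. f \<in> Jhom k p \<longrightarrow> g \<in> Jhom l q \<longrightarrow>
        br f g = jconst (u * of_int k + v * of_nat p) * f * d g
               - jconst (u * of_int l + v * of_nat q) * g * d f)"

definition cond1 :: "(jpoly \<Rightarrow> jpoly \<Rightarrow> jpoly) \<Rightarrow> bool" where
  "cond1 br \<longleftrightarrow> (\<exists>d u v. d \<noteq> (\<lambda>_. 0) \<and> admissible_derivation d \<and> kappa_identity br d u v)"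

definition familyB_params ::
  "(jpoly \<Rightarrow> jpoly \<Rightarrow> jpoly) \<Rightarrow> complex \<Rightarrow> complex \<Rightarrow> complex \<Rightarrow> bool" where
  "familyB_params br \<gamma> lam \<epsilon> \<longleftrightarrow>
     br E4 E6 = jconst (-2) * E4^3 + jconst 2 * E6^2 \<and>
     br A E4 = jconst (\<epsilon> + 2/3) * E6 * A + jconst \<gamma> * E4 * B \<and>
     br A E6 = jconst (3/2 * \<epsilon> + 1) * E4^2 * A + jconst (3/2 * \<gamma>) * E6 * B \<and>
     br B E4 = jconst lam * E4^2 * A + jconst \<epsilon> * E6 * B \<and>
     br B E6 = jconst (3/2 * lam) * E4 * E6 * A + jconst (3/2 * \<epsilon>) * E4^2 * B \<and>
     br A B = jconst ((3/4 * \<epsilon> + 1/2) * lam) * E4 * A^2 - jconst (3/4 * \<epsilon> * \<gamma>) * B^2"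

definition familyB :: "(jpoly \<Rightarrow> jpoly \<Rightarrow> jpoly) \<Rightarrow> bool" where
  "familyB br \<longleftrightarrow> (\<exists>\<gamma> lam \<epsilon>. familyB_params br \<gamma> lam \<epsilon>)"

end

theory Submission
  imports Defs
begin


lemma update_eq_add_single:
  fixes f :: "'a \<Rightarrow>\<^sub>0 'b::comm_monoid_add"
  assumes "a \<notin> Poly_Mapping.keys f"
  shows "Poly_Mapping.update a b f = f + Poly_Mapping.single a b"
  using assms by (intro poly_mapping_eqI) (auto simp: lookup_update lookup_add lookup_single in_keys_iff when_def)

lemma pm_induct[case_names zero single add]:
  fixes f :: "'a \<Rightarrow>\<^sub>0 'b::comm_monoid_add"
  assumes "P 0" "\<And>m c. P (Poly_Mapping.single m c)" "\<And>f g. P f \<Longrightarrow> P g \<Longrightarrow> P (f + g)"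
  shows "P f"
proof (induction f rule: update_induct)
  case const show ?case by (rule assms(1))
next
  case (update f a b)
  then show ?case using assms(2,3) update_eq_add_single by metis
qed

lemma mono_induct[case_names zero step]:
  fixes m :: "'a \<Rightarrow>\<^sub>0 nat"
  assumes "P 0" "\<And>m x. P m \<Longrightarrow> P (m + Poly_Mapping.single x 1)"
  shows "P m"
proof (induction m rule: update_induct)
  case const then show ?case using assms(1) by simp
next
  case (update f a b)
  have "P (f + Poly_Mapping.single a n)" for n
  proof (induction n)
    case 0 then show ?case using update(3) by simp
  next
    case (Suc n)
    then have "P ((f + Poly_Mapping.single a n) + Poly_Mapping.single a 1)" by (rule assms(2))
    then show ?case by (simp add: single_add[symmetric] add.assoc)
  qed
  then show ?case using update_eq_add_single[OF update(1)] by simp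
qed

lemma jconst_mult: "jconst a * jconst b = jconst (a*b)" unfolding jconst_def by (simp add: mult_single)
lemma jconst_add: "jconst a + jconst b = jconst (a+b)" by (simp add: jconst_def single_add)
lemma jconst_one: "jconst 1 = 1" by (simp add: jconst_def)
lemma jconst_zero: "jconst 0 = 0" by (simp add: jconst_def)
lemma jconst_single: "jconst c * Poly_Mapping.single m d = Poly_Mapping.single m (c*d)"
  by (simp add: jconst_def mult_single)
lemma single_jconst: "Poly_Mapping.single m c = jconst c * Poly_Mapping.single m 1"
  by (simp add: jconst_single)
lemma single_var: "Poly_Mapping.single (m + Poly_Mapping.single x 1) (1::complex) = Poly_Mapping.single m 1 * jvarp x"
  by (simp add: jvarp_def mult_single)

lemma neg_self_zero: "(a::jpoly) = - a \<Longrightarrow> a = 0"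
proof (rule poly_mapping_eqI)
  fix k assume "a = - a"
  then have "Poly_Mapping.lookup a k = - Poly_Mapping.lookup a k" by (metis lookup_uminus)
  then show "Poly_Mapping.lookup a k = Poly_Mapping.lookup 0 k" by simp
qed

section \<open>Derivations\<close>

context fixes d :: "jpoly \<Rightarrow> jpoly" assumes d: "derivation d"
begin
lemma deriv_add: "d (f+g) = d f + d g" using d unfolding derivation_def by blast
lemma deriv_smul: "d (jconst c * f) = jconst c * d f" using d unfolding derivation_def by blast
lemma deriv_mult: "d (f*g) = f * d g + g * d f" using d unfolding derivation_def by blast
lemma deriv_zero: "d 0 = 0" using deriv_add[of 0 0] by simp
lemma deriv_one: "d 1 = 0" using deriv_mult[of 1 1] by simp
lemma deriv_sum: "d (sum F S) = sum (\<lambda>x. d (F x)) S"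
  by (induction S rule: infinite_finite_induct) (simp_all add: deriv_zero deriv_add)
end

lemma deriv_unique:
  assumes d1: "derivation d1" and d2: "derivation d2" and v: "\<And>x. d1 (jvarp x) = d2 (jvarp x)"
  shows "d1 f = d2 f"
proof -
  have m: "d1 (Poly_Mapping.single m 1) = d2 (Poly_Mapping.single m 1)" for m
  proof (induction m rule: mono_induct)
    case zero then show ?case using deriv_one[OF d1] deriv_one[OF d2] by simp
  next
    case (step m x)
    then show ?case by (simp only: single_var deriv_mult[OF d1] deriv_mult[OF d2] v)
  qed
  show ?thesis
  proof (induction f rule: pm_induct)
    case zero then show ?case using deriv_zero[OF d1] deriv_zero[OF d2] by simp
  next
    case (single m c) then show ?case
      by (subst (1 2) single_jconst) (simp add: deriv_smul[OF d1] deriv_smul[OF d2] m)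
  next
    case (add f g) then show ?case by (simp add: deriv_add[OF d1] deriv_add[OF d2])
  qed
qed

lemma deriv_neg: "derivation d \<Longrightarrow> derivation (\<lambda>f. - d f)"
  unfolding derivation_def by (metis (no_types, lifting) minus_add_distrib mult_minus_right)

section \<open>Partial derivatives\<close>

lemma pderivj_single: "pderivj x (Poly_Mapping.single m c) =
   Poly_Mapping.single (m - Poly_Mapping.single x 1) (of_nat (Poly_Mapping.lookup m x) * c)"
  by (cases "c = 0") (simp_all add: pderivj_def)

lemma pderivj_zero: "pderivj x 0 = 0" by (simp add: pderivj_def)

lemma pderivj_add: "pderivj x (f + g) = pderivj x f + pderivj x g"
  unfolding pderivj_def by (rule setsum_keys_plus_distrib) (simp_all add: single_add distrib_left)

lemma pderivj_smul: "pderivj x (jconst c * f) = jconst c * pderivj x f"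
proof (induction f rule: pm_induct)
  case zero then show ?case by (simp add: pderivj_zero)
next
  case (single m d) then show ?case by (simp add: jconst_single pderivj_single mult_ac)
next
  case (add f g) then show ?case by (simp add: distrib_left pderivj_add)
qed

lemma single_shift:
  "Poly_Mapping.single (m + (n - Poly_Mapping.single x 1)) (of_nat (Poly_Mapping.lookup n x) * (c::complex))
   = Poly_Mapping.single (m + n - Poly_Mapping.single x 1) (of_nat (Poly_Mapping.lookup n x) * c)"
proof (cases "Poly_Mapping.lookup n x = 0")
  case True then show ?thesis by simp
next
  case False
  have "m + (n - Poly_Mapping.single x 1) = m + n - Poly_Mapping.single x 1"
    using False by (intro poly_mapping_eqI) (auto simp: lookup_add lookup_minus lookup_single when_def)
  then show ?thesis by simp
qed

lemma pderivj_mult_single: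
  "pderivj x (Poly_Mapping.single m a * Poly_Mapping.single n b) =
     Poly_Mapping.single m a * pderivj x (Poly_Mapping.single n b) + Poly_Mapping.single n b * pderivj x (Poly_Mapping.single m a)"
proof -
  have 1: "Poly_Mapping.single m a * pderivj x (Poly_Mapping.single n b) =
     Poly_Mapping.single (m + n - Poly_Mapping.single x 1) (of_nat (Poly_Mapping.lookup n x) * (a*b))"
    using single_shift[of m n x "a*b"] by (simp add: pderivj_single mult_single mult_ac)
  have 2: "Poly_Mapping.single n b * pderivj x (Poly_Mapping.single m a) =
     Poly_Mapping.single (m + n - Poly_Mapping.single x 1) (of_nat (Poly_Mapping.lookup m x) * (a*b))"
    using single_shift[of n m x "a*b"] by (simp add: pderivj_single mult_single mult_ac add.commute)
  show ?thesis unfolding 1 2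
    by (simp add: mult_single pderivj_single lookup_add single_add[symmetric] distrib_right add.commute)
qed

lemma pderivj_mult: "pderivj x (f * g) = f * pderivj x g + g * pderivj x f"
proof (induction f rule: pm_induct)
  case zero then show ?case by (simp add: pderivj_zero)
next
  case (single m a)
  show ?case
  proof (induction g rule: pm_induct)
    case zero then show ?case by (simp add: pderivj_zero)
  next
    case (single n b) then show ?case by (rule pderivj_mult_single)
  next
    case (add g h) then show ?case by (simp add: distrib_left distrib_right pderivj_add)
  qed
next
  case (add f h) then show ?case by (simp add: distrib_left distrib_right pderivj_add)
qed

definition dT :: "(jvar \<Rightarrow> jpoly) \<Rightarrow> jpoly \<Rightarrow> jpoly" where
  "dT T f = pderivj vE4 f * T vE4 + pderivj vE6 f * T vE6 + pderivj vA f * T vA + pderivj vB f * T vB"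

lemma derivation_dT: "derivation (dT T)"
proof -
  have "dT T (f+g) = dT T f + dT T g" for f g
    unfolding dT_def by (simp add: pderivj_add algebra_simps)
  moreover have "dT T (jconst c * f) = jconst c * dT T f" for c f
    unfolding dT_def pderivj_smul by (simp add: algebra_simps)
  moreover have "dT T (f * g) = f * dT T g + g * dT T f" for f g
    unfolding dT_def pderivj_mult by (simp add: algebra_simps)
  ultimately show ?thesis unfolding derivation_def by blast
qed

lemma pderivj_var: "pderivj y (jvarp x) = (if x = y then 1 else 0)"
  by (simp add: jvarp_def pderivj_single lookup_single when_def)

lemma dT_var: "dT T (jvarp x) = T x"
  by (cases x) (simp_all add: dT_def pderivj_var)




lemma mweight_add: "mweight (m + n) = mweight m + mweight n"
  by (simp add: mweight_def lookup_add algebra_simps)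
lemma mindex_add: "mindex (m + n) = mindex m + mindex n"
  by (simp add: mindex_def lookup_add)
lemma mweight_zero[simp]: "mweight 0 = 0" by (simp add: mweight_def)
lemma mindex_zero[simp]: "mindex 0 = 0" by (simp add: mindex_def)

lemma Jhom_zero: "0 \<in> Jhom k p" by (simp add: Jhom_def)
lemma Jhom_add: "f \<in> Jhom k p \<Longrightarrow> g \<in> Jhom k p \<Longrightarrow> f + g \<in> Jhom k p"
  unfolding Jhom_def using keys_add[of f g] by auto
lemma Jhom_uminus: "f \<in> Jhom k p \<Longrightarrow> - f \<in> Jhom k p"
  unfolding Jhom_def by simp
lemma Jhom_diff: "f \<in> Jhom k p \<Longrightarrow> g \<in> Jhom k p \<Longrightarrow> f - g \<in> Jhom k p"
  using Jhom_add[of f k p "- g"] Jhom_uminus by simp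
lemma Jhom_mult: "f \<in> Jhom k p \<Longrightarrow> g \<in> Jhom l q \<Longrightarrow> k + l = k' \<Longrightarrow> p + q = p' \<Longrightarrow> f * g \<in> Jhom k' p'"
proof -
  assume f: "f \<in> Jhom k p" and g: "g \<in> Jhom l q" and kl: "k + l = k'" and pq: "p + q = p'"
  show ?thesis unfolding Jhom_def mem_Collect_eq
  proof
    fix m assume "m \<in> Poly_Mapping.keys (f * g)"
    then obtain a b where "m = a + b" "a \<in> Poly_Mapping.keys f" "b \<in> Poly_Mapping.keys g"
      using keys_mult[of f g] by blast
    then show "mweight m = k' \<and> mindex m = p'"
      using f g kl pq unfolding Jhom_def by (simp add: mweight_add mindex_add)
  qed
qed
lemma Jhom_single: "mweight m = k \<Longrightarrow> mindex m = p \<Longrightarrow> Poly_Mapping.single m c \<in> Jhom k p"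
  unfolding Jhom_def by simp
lemma Jhom_jconst: "jconst c \<in> Jhom 0 0"
  unfolding jconst_def by (rule Jhom_single) simp_all
lemma Jhom_smul: "f \<in> Jhom k p \<Longrightarrow> jconst c * f \<in> Jhom k p"
  using Jhom_mult[OF Jhom_jconst] by simp
lemma Jhom_sum: "(\<And>x. x \<in> S \<Longrightarrow> F x \<in> Jhom k p) \<Longrightarrow> sum F S \<in> Jhom k p"
  by (induction S rule: infinite_finite_induct) (simp_all add: Jhom_zero Jhom_add)
lemma Jhom_var: "jvarp x \<in> Jhom (mweight (Poly_Mapping.single x 1)) (mindex (Poly_Mapping.single x 1))"
  unfolding jvarp_def by (rule Jhom_single) simp_all

lemma pm_sum_single: "f = (\<Sum>m\<in>Poly_Mapping.keys f. Poly_Mapping.single m (Poly_Mapping.lookup f m))"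
proof (rule poly_mapping_eqI)
  fix k
  show "Poly_Mapping.lookup f k = Poly_Mapping.lookup (\<Sum>m\<in>Poly_Mapping.keys f. Poly_Mapping.single m (Poly_Mapping.lookup f m)) k"
    by (simp add: lookup_sum lookup_single when_def in_keys_iff)
qed

lemma hom_deriv:
  assumes d: "derivation d"
    and hx: "\<And>x. d (jvarp x) \<in> Jhom (mweight (Poly_Mapping.single x 1) + s) (mindex (Poly_Mapping.single x 1))"
    and f: "f \<in> Jhom k p"
  shows "d f \<in> Jhom (k + s) p"
proof -
  have m: "d (Poly_Mapping.single m 1) \<in> Jhom (mweight m + s) (mindex m)" for m
  proof (induction m rule: mono_induct)
    case zero then show ?case using deriv_one[OF d] by (simp add: Jhom_zero)
  next
    case (step m x)
    have 1: "Poly_Mapping.single m 1 * d (jvarp x) \<in> Jhom (mweight (m + Poly_Mapping.single x 1) + s) (mindex (m + Poly_Mapping.single x 1))"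
      by (rule Jhom_mult[OF Jhom_single hx]) (simp_all add: mweight_add mindex_add)
    have 2: "jvarp x * d (Poly_Mapping.single m 1) \<in> Jhom (mweight (m + Poly_Mapping.single x 1) + s) (mindex (m + Poly_Mapping.single x 1))"
      by (rule Jhom_mult[OF Jhom_var step]) (simp_all add: mweight_add mindex_add)
    show ?case unfolding single_var deriv_mult[OF d] by (rule Jhom_add[OF 1 2])
  qed
  have "d f = (\<Sum>m\<in>Poly_Mapping.keys f. jconst (Poly_Mapping.lookup f m) * d (Poly_Mapping.single m 1))"
    by (subst pm_sum_single) (simp add: deriv_sum[OF d] single_jconst[of _ "Poly_Mapping.lookup f _"] deriv_smul[OF d])
  also have "\<dots> \<in> Jhom (k + s) p"
    using f m unfolding Jhom_def[of k p] by (intro Jhom_sum Jhom_smul) auto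
  finally show ?thesis .
qed

definition kap :: "complex \<Rightarrow> complex \<Rightarrow> (jvar \<Rightarrow>\<^sub>0 nat) \<Rightarrow> complex" where
  "kap u v m = u * of_int (mweight m) + v * of_nat (mindex m)"

lemma kap_add: "kap u v (m + n) = kap u v m + kap u v n"
  by (simp add: kap_def mweight_add mindex_add algebra_simps)

lemma euler_deriv:
  assumes K: "derivation K"
    and hx: "\<And>x. K (jvarp x) = jconst (kap u v (Poly_Mapping.single x 1)) * jvarp x"
    and f: "f \<in> Jhom k p"
  shows "K f = jconst (u * of_int k + v * of_nat p) * f"
proof -
  have m: "K (Poly_Mapping.single m 1) = jconst (kap u v m) * Poly_Mapping.single m 1" for m
  proof (induction m rule: mono_induct)
    case zero then show ?case using deriv_one[OF K] by (simp add: kap_def jconst_zero)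
  next
    case (step m x)
    show ?case unfolding single_var deriv_mult[OF K] step hx kap_add jconst_add[symmetric]
      by (simp add: algebra_simps)
  qed
  have "K f = (\<Sum>m\<in>Poly_Mapping.keys f. jconst (Poly_Mapping.lookup f m) * K (Poly_Mapping.single m 1))"
    by (subst pm_sum_single) (simp add: deriv_sum[OF K] single_jconst[of _ "Poly_Mapping.lookup f _"] deriv_smul[OF K])
  also have "\<dots> = (\<Sum>m\<in>Poly_Mapping.keys f. jconst (u * of_int k + v * of_nat p) * (jconst (Poly_Mapping.lookup f m) * Poly_Mapping.single m 1))"
    using f unfolding Jhom_def by (intro sum.cong) (auto simp: m kap_def mult_ac)
  also have "\<dots> = jconst (u * of_int k + v * of_nat p) * f"
    by (subst (2) pm_sum_single) (simp add: sum_distrib_left single_jconst[of _ "Poly_Mapping.lookup f _"])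
  finally show ?thesis .
qed

section \<open>Brackets\<close>

context fixes br assumes pb: "poisson_bracket br"
begin
lemma br_add1: "br (f+g) h = br f h + br g h" using pb unfolding poisson_bracket_def by blast
lemma br_smul1: "br (jconst c * f) g = jconst c * br f g" using pb unfolding poisson_bracket_def by blast
lemma br_anti: "br f g = - br g f" using pb unfolding poisson_bracket_def by blast
lemma br_leib: "br f (g*h) = br f g * h + g * br f h" using pb unfolding poisson_bracket_def by blast
lemma br_deriv: "derivation (br f)"
proof -
  have "br f (g+h) = br f g + br f h" for g h
    by (metis br_anti br_add1 minus_add_distrib)
  moreover have "br f (jconst c * g) = jconst c * br f g" for c g
    by (metis br_anti br_smul1 mult_minus_right)
  moreover have "br f (g * h) = g * br f h + h * br f g" for g h
    by (simp add: br_leib algebra_simps)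
  ultimately show ?thesis unfolding derivation_def by blast
qed
lemma br_self: "br f f = 0" using br_anti[of f f] neg_self_zero by blast
end

definition phi :: "(jpoly \<Rightarrow> jpoly) \<Rightarrow> (jpoly \<Rightarrow> jpoly) \<Rightarrow> jpoly \<Rightarrow> jpoly \<Rightarrow> jpoly" where
  "phi K d f g = K f * d g - K g * d f"

lemma phi_anti: "phi K d f g = - phi K d g f" by (simp add: phi_def)

lemma phi_deriv:
  assumes K: "derivation K" and d: "derivation d"
  shows "derivation (phi K d f)"
proof -
  have "phi K d f (g+h) = phi K d f g + phi K d f h" for g h
    by (simp add: phi_def deriv_add[OF K] deriv_add[OF d] algebra_simps)
  moreover have "phi K d f (jconst c * g) = jconst c * phi K d f g" for c g
    unfolding phi_def deriv_smul[OF K] deriv_smul[OF d] by (simp add: algebra_simps)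
  moreover have "phi K d f (g * h) = g * phi K d f h + h * phi K d f g" for g h
    by (simp add: phi_def deriv_mult[OF K] deriv_mult[OF d] algebra_simps)
  ultimately show ?thesis unfolding derivation_def by blast
qed

lemma bider_unique:
  assumes D1: "\<And>f. derivation (B1 f)" and D2: "\<And>f. derivation (B2 f)"
    and A1: "\<And>f g. B1 f g = - B1 g f" and A2: "\<And>f g. B2 f g = - B2 g f"
    and V: "\<And>x y. B1 (jvarp x) (jvarp y) = B2 (jvarp x) (jvarp y)"
  shows "B1 f g = B2 f g"
proof -
  have 1: "B1 (jvarp x) h = B2 (jvarp x) h" for x h
    by (rule deriv_unique[OF D1 D2 V])
  have "(\<lambda>f. B1 f g) = (\<lambda>f. - B1 g f)" using A1 by blast
  then have E1: "derivation (\<lambda>f. B1 f g)" using deriv_neg[OF D1] by simp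
  have "(\<lambda>f. B2 f g) = (\<lambda>f. - B2 g f)" using A2 by blast
  then have E2: "derivation (\<lambda>f. B2 f g)" using deriv_neg[OF D2] by simp
  show ?thesis using deriv_unique[OF E1 E2, of f] 1 by simp
qed




definition mon :: "nat \<Rightarrow> nat \<Rightarrow> nat \<Rightarrow> nat \<Rightarrow> (jvar \<Rightarrow>\<^sub>0 nat)" where
  "mon a b c e = Poly_Mapping.single vE4 a + Poly_Mapping.single vE6 b + Poly_Mapping.single vA c + Poly_Mapping.single vB e"

definition X :: "nat \<Rightarrow> nat \<Rightarrow> nat \<Rightarrow> nat \<Rightarrow> complex \<Rightarrow> jpoly" where
  "X a b c e z = Poly_Mapping.single (mon a b c e) z"

lemma lookup_mon[simp]:
  "Poly_Mapping.lookup (mon a b c e) vE4 = a" "Poly_Mapping.lookup (mon a b c e) vE6 = b"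
  "Poly_Mapping.lookup (mon a b c e) vA = c" "Poly_Mapping.lookup (mon a b c e) vB = e"
  by (simp_all add: mon_def lookup_add lookup_single)

lemma mon_ext: "(\<And>x. Poly_Mapping.lookup m x = Poly_Mapping.lookup n x) \<Longrightarrow> m = n"
  by (rule poly_mapping_eqI)

lemma mon_of: "m = mon (Poly_Mapping.lookup m vE4) (Poly_Mapping.lookup m vE6) (Poly_Mapping.lookup m vA) (Poly_Mapping.lookup m vB)"
proof (rule mon_ext)
  fix x show "Poly_Mapping.lookup m x = Poly_Mapping.lookup (mon (Poly_Mapping.lookup m vE4) (Poly_Mapping.lookup m vE6) (Poly_Mapping.lookup m vA) (Poly_Mapping.lookup m vB)) x"
    by (cases x) simp_all
qed

lemma mon_eq_iff: "mon a b c e = mon a' b' c' e' \<longleftrightarrow> a = a' \<and> b = b' \<and> c = c' \<and> e = e'"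
proof
  assume "mon a b c e = mon a' b' c' e'"
  then show "a = a' \<and> b = b' \<and> c = c' \<and> e = e'"
    by (metis lookup_mon)
qed simp

lemma mon_add: "mon a b c e + mon a' b' c' e' = mon (a+a') (b+b') (c+c') (e+e')"
proof (rule mon_ext)
  fix x show "Poly_Mapping.lookup (mon a b c e + mon a' b' c' e') x = Poly_Mapping.lookup (mon (a+a') (b+b') (c+c') (e+e')) x"
    by (cases x) (simp_all add: lookup_add)
qed

lemma X_mult[simp]: "X a b c e z * X a' b' c' e' z' = X (a+a') (b+b') (c+c') (e+e') (z*z')"
  by (simp add: X_def mult_single mon_add)

lemma mon_var:
  "Poly_Mapping.single vE4 1 = mon 1 0 0 0" "Poly_Mapping.single vE6 1 = mon 0 1 0 0"
  "Poly_Mapping.single vA 1 = mon 0 0 1 0" "Poly_Mapping.single vB 1 = mon 0 0 0 1"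
  by (simp_all add: mon_def)

lemma var_X: "E4 = X 1 0 0 0 1" "E6 = X 0 1 0 0 1" "A = X 0 0 1 0 1" "B = X 0 0 0 1 1"
  unfolding X_def jvarp_def mon_var by simp_all

lemma jconst_X: "jconst z = X 0 0 0 0 z"
  by (simp add: X_def jconst_def mon_def)

lemma lookup_X: "Poly_Mapping.lookup (X a b c e z) (mon a' b' c' e') = (if a = a' \<and> b = b' \<and> c = c' \<and> e = e' then z else 0)"
  by (simp add: X_def lookup_single when_def mon_eq_iff eq_commute)

lemma lookup_X': "Poly_Mapping.lookup (X a b c e z) m = (if Poly_Mapping.lookup m vE4 = a \<and> Poly_Mapping.lookup m vE6 = b \<and> Poly_Mapping.lookup m vA = c \<and> Poly_Mapping.lookup m vB = e then z else 0)"
  by (subst mon_of[of m]) (simp add: lookup_X eq_commute)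

lemma mweight_mono: "mweight (mon a b c e) = 4 * int a + 6 * int b - 2 * int c"
  by (simp add: mweight_def)
lemma mindex_mono: "mindex (mon a b c e) = c + e"
  by (simp add: mindex_def)

lemmas Xnorm = var_X jconst_X X_mult power2_eq_square power3_eq_cube ring_distribs

definition Fk :: "(jpoly \<Rightarrow> jpoly) \<Rightarrow> complex \<Rightarrow> complex \<Rightarrow> jpoly \<Rightarrow> int \<Rightarrow> nat \<Rightarrow> jpoly \<Rightarrow> int \<Rightarrow> nat \<Rightarrow> jpoly" where
  "Fk d u v f k p g l q = jconst (u * of_int k + v * of_nat p) * f * d g - jconst (u * of_int l + v * of_nat q) * g * d f"

lemma gen_family:
  assumes u: "u \<noteq> 0" and v: "v = -3 * \<epsilon> * u"
    and dE4: "d E4 = jconst (- 1 / (3 * u)) * E6" and dE6: "d E6 = jconst (- 1 / (2 * u)) * E4^2"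
    and dA: "d A = jconst (- \<gamma> / (4 * u)) * B" and dB: "d B = jconst (- lam / (4 * u)) * E4 * A"
  shows "Fk d u v E4 4 0 E6 6 0 = jconst (-2) * E4^3 + jconst 2 * E6^2"
    and "Fk d u v A (-2) 1 E4 4 0 = jconst (\<epsilon> + 2/3) * E6 * A + jconst \<gamma> * E4 * B"
    and "Fk d u v A (-2) 1 E6 6 0 = jconst (3/2 * \<epsilon> + 1) * E4^2 * A + jconst (3/2 * \<gamma>) * E6 * B"
    and "Fk d u v B 0 1 E4 4 0 = jconst lam * E4^2 * A + jconst \<epsilon> * E6 * B"
    and "Fk d u v B 0 1 E6 6 0 = jconst (3/2 * lam) * E4 * E6 * A + jconst (3/2 * \<epsilon>) * E4^2 * B"
    and "Fk d u v A (-2) 1 B 0 1 = jconst ((3/4 * \<epsilon> + 1/2) * lam) * E4 * A^2 - jconst (3/4 * \<epsilon> * \<gamma>) * B^2"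
  unfolding Fk_def dE4 dE6 dA dB v
  by (rule poly_mapping_eqI; simp add: Xnorm lookup_add lookup_minus lookup_X'; auto simp: field_simps u)+




lemma keys_det:
  assumes f: "f \<in> Jhom k p" and det: "\<And>m. mweight m = k \<Longrightarrow> mindex m = p \<Longrightarrow> m = m0"
  shows "f = Poly_Mapping.single m0 (Poly_Mapping.lookup f m0)"
proof (rule poly_mapping_eqI)
  fix m
  show "Poly_Mapping.lookup f m = Poly_Mapping.lookup (Poly_Mapping.single m0 (Poly_Mapping.lookup f m0)) m"
  proof (cases "m = m0")
    case True then show ?thesis by simp
  next
    case False
    then have "m \<notin> Poly_Mapping.keys f" using f det unfolding Jhom_def by blast
    then show ?thesis using False by (simp add: in_keys_iff lookup_single when_def)
  qed
qed

lemma det_gen: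
  assumes "mweight m = k" "mindex m = p"
  shows "4 * int (Poly_Mapping.lookup m vE4) + 6 * int (Poly_Mapping.lookup m vE6) - 2 * int (Poly_Mapping.lookup m vA) = k"
    "Poly_Mapping.lookup m vA + Poly_Mapping.lookup m vB = p"
  using assms by (simp_all add: mweight_def mindex_def)

lemma det_6_0: assumes "mweight m = 6" "mindex m = 0" shows "m = mon 0 1 0 0"
proof -
  have h: "4 * int (Poly_Mapping.lookup m vE4) + 6 * int (Poly_Mapping.lookup m vE6) - 2 * int (Poly_Mapping.lookup m vA) = 6"
    "Poly_Mapping.lookup m vA + Poly_Mapping.lookup m vB = 0" using det_gen[OF assms] by simp_all
  then show ?thesis by (subst mon_of) (simp add: mon_eq_iff; presburger)
qed
lemma det_8_0: assumes "mweight m = 8" "mindex m = 0" shows "m = mon 2 0 0 0"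
proof -
  have h: "4 * int (Poly_Mapping.lookup m vE4) + 6 * int (Poly_Mapping.lookup m vE6) - 2 * int (Poly_Mapping.lookup m vA) = 8"
    "Poly_Mapping.lookup m vA + Poly_Mapping.lookup m vB = 0" using det_gen[OF assms] by simp_all
  then show ?thesis by (subst mon_of) (simp add: mon_eq_iff; presburger)
qed
lemma det_0_1: assumes "mweight m = 0" "mindex m = 1" shows "m = mon 0 0 0 1"
proof -
  have h: "4 * int (Poly_Mapping.lookup m vE4) + 6 * int (Poly_Mapping.lookup m vE6) - 2 * int (Poly_Mapping.lookup m vA) = 0"
    "Poly_Mapping.lookup m vA + Poly_Mapping.lookup m vB = 1" using det_gen[OF assms] by simp_all
  then show ?thesis by (subst mon_of) (simp add: mon_eq_iff; presburger)
qed
lemma det_2_1: assumes "mweight m = 2" "mindex m = 1" shows "m = mon 1 0 1 0"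
proof -
  have h: "4 * int (Poly_Mapping.lookup m vE4) + 6 * int (Poly_Mapping.lookup m vE6) - 2 * int (Poly_Mapping.lookup m vA) = 2"
    "Poly_Mapping.lookup m vA + Poly_Mapping.lookup m vB = 1" using det_gen[OF assms] by simp_all
  then show ?thesis by (subst mon_of) (simp add: mon_eq_iff; presburger)
qed

lemma mw_vars[simp]:
  "mweight (Poly_Mapping.single vE4 1) = 4" "mweight (Poly_Mapping.single vE6 1) = 6"
  "mweight (Poly_Mapping.single vA 1) = -2" "mweight (Poly_Mapping.single vB 1) = 0"
  "mindex (Poly_Mapping.single vE4 1) = 0" "mindex (Poly_Mapping.single vE6 1) = 0"
  "mindex (Poly_Mapping.single vA 1) = 1" "mindex (Poly_Mapping.single vB 1) = 1"
  by (simp_all add: mweight_def mindex_def lookup_single)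

lemmas mw_vars' = mw_vars[simplified]
declare mw_vars'[simp]

lemma gens_hom: "E4 \<in> Jhom 4 0" "E6 \<in> Jhom 6 0" "A \<in> Jhom (-2) 1" "B \<in> Jhom 0 1"
  using Jhom_var[of vE4] Jhom_var[of vE6] Jhom_var[of vA] Jhom_var[of vB] unfolding mw_vars by simp_all

lemma kappa_Fk: "kappa_identity br d u v \<Longrightarrow> f \<in> Jhom k p \<Longrightarrow> g \<in> Jhom l q \<Longrightarrow> br f g = Fk d u v f k p g l q"
  unfolding kappa_identity_def Fk_def by blast

lemma serre_E4: "serre E4 = jconst (-1/3) * E6"
  by (simp add: serre_def pderivj_var)
lemma serre_E6: "serre E6 = jconst (-1/2) * E4^2"
  by (simp add: serre_def pderivj_var)

lemma br_E4E6:
  assumes "admissible_pb br" shows "br E4 E6 = jconst (-2) * E4^3 + jconst 2 * E6^2"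
proof -
  have "br E4 E6 = RC1 4 E4 6 E6" using assms gens_hom unfolding admissible_pb_def by blast
  also have "\<dots> = jconst (-2) * E4^3 + jconst 2 * E6^2"
    unfolding RC1_def serre_E4 serre_E6
    by (rule poly_mapping_eqI; simp add: Xnorm lookup_add lookup_minus lookup_X')
  finally show ?thesis .
qed

lemma forward:
  assumes adm: "admissible_pb br" and ad: "admissible_derivation d" and kap: "kappa_identity br d u v"
  shows "u \<noteq> 0 \<and> d E4 = jconst (- 1 / (3 * u)) * E6 \<and> d E6 = jconst (- 1 / (2 * u)) * E4^2 \<and>
     (\<exists>c e. d A = jconst c * B \<and> d B = jconst e * E4 * A)"
proof -
  have dh: "f \<in> Jhom k p \<Longrightarrow> d f \<in> Jhom (k+2) p" for f k p
    using ad unfolding admissible_derivation_def by blast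
  have dh1: "d E4 \<in> Jhom 6 0" using dh[OF gens_hom(1)] by simp
  have dh2: "d E6 \<in> Jhom 8 0" using dh[OF gens_hom(2)] by simp
  have dh3: "d A \<in> Jhom 0 1" using dh[OF gens_hom(3)] by simp
  have dh4: "d B \<in> Jhom 2 1" using dh[OF gens_hom(4)] by simp
  define a where "a = Poly_Mapping.lookup (d E4) (mon 0 1 0 0)"
  define b where "b = Poly_Mapping.lookup (d E6) (mon 2 0 0 0)"
  define c where "c = Poly_Mapping.lookup (d A) (mon 0 0 0 1)"
  define e where "e = Poly_Mapping.lookup (d B) (mon 1 0 1 0)"
  have "d E4 = X 0 1 0 0 a"
    unfolding X_def a_def by (rule keys_det[OF dh1 det_6_0])
  then have dE4: "d E4 = jconst a * E6" by (simp add: Xnorm numeral_2_eq_2)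
  have "d E6 = X 2 0 0 0 b"
    unfolding X_def b_def by (rule keys_det[OF dh2 det_8_0])
  then have dE6: "d E6 = jconst b * E4^2" by (simp add: Xnorm numeral_2_eq_2)
  have "d A = X 0 0 0 1 c"
    unfolding X_def c_def by (rule keys_det[OF dh3 det_0_1])
  then have dA: "d A = jconst c * B" by (simp add: Xnorm numeral_2_eq_2)
  have "d B = X 1 0 1 0 e"
    unfolding X_def e_def by (rule keys_det[OF dh4 det_2_1])
  then have dB: "d B = jconst e * E4 * A" by (simp add: Xnorm numeral_2_eq_2)
  have eq: "Fk d u v E4 4 0 E6 6 0 = jconst (-2) * E4^3 + jconst 2 * E6^2"
    using br_E4E6[OF adm] kappa_Fk[OF kap gens_hom(1,2)] by simp
  have h1: "u * 4 * b = -2"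
    using arg_cong[OF eq, of "\<lambda>p. Poly_Mapping.lookup p (mon 3 0 0 0)"]
    unfolding Fk_def dE4 dE6 by (simp add: Xnorm lookup_add lookup_minus lookup_X)
  have h2: "- (u * 6 * a) = 2"
    using arg_cong[OF eq, of "\<lambda>p. Poly_Mapping.lookup p (mon 0 2 0 0)"]
    unfolding Fk_def dE4 dE6 by (simp add: Xnorm lookup_add lookup_minus lookup_X)
  have u: "u \<noteq> 0" using h1 by auto
  have h2': "u * 6 * a = -2" using h2 by (metis minus_minus)
  have "a = (u * 6 * a) / (u * 6)" using u by simp
  also have "\<dots> = -2 / (u * 6)" using h2' by (simp only:)
  also have "\<dots> = - 1 / (3 * u)" using u by (simp add: field_simps)
  finally have ha: "a = - 1 / (3 * u)" .
  have "b = (u * 4 * b) / (u * 4)" using u by simp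
  also have "\<dots> = -2 / (u * 4)" using h1 by (simp only:)
  also have "\<dots> = - 1 / (2 * u)" using u by (simp add: field_simps)
  finally have "b = - 1 / (2 * u)" .
  note ha this
  then show ?thesis using u dE4 dE6 dA dB by blast
qed




lemma converse:
  assumes adm: "admissible_pb br" and fam: "familyB_params br \<gamma> lam \<epsilon>" and u: "u \<noteq> 0"
  shows "\<exists>d. admissible_derivation d \<and>
           d E4 = jconst (- 1 / (3 * u)) * E6 \<and>
           d E6 = jconst (- 1 / (2 * u)) * E4^2 \<and>
           d A = jconst (- \<gamma> / (4 * u)) * B \<and>
           d B = jconst (- lam / (4 * u)) * E4 * A \<and>
           kappa_identity br d u (-3 * \<epsilon> * u)"
proof -
  define v where "v = -3 * \<epsilon> * u"
  define T where "T x = (case x of vE4 \<Rightarrow> jconst (- 1 / (3 * u)) * E6 | vE6 \<Rightarrow> jconst (- 1 / (2 * u)) * E4^2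
      | vA \<Rightarrow> jconst (- \<gamma> / (4 * u)) * B | vB \<Rightarrow> jconst (- lam / (4 * u)) * E4 * A)" for x
  define d where "d = dT T"
  define K where "K = dT (\<lambda>x. jconst (kap u v (Poly_Mapping.single x 1)) * jvarp x)"
  have dd: "derivation d" and dK: "derivation K" unfolding d_def K_def by (rule derivation_dT)+
  have dE4: "d E4 = jconst (- 1 / (3 * u)) * E6" unfolding d_def dT_var T_def by simp
  have dE6: "d E6 = jconst (- 1 / (2 * u)) * E4^2" unfolding d_def dT_var T_def by simp
  have dA: "d A = jconst (- \<gamma> / (4 * u)) * B" unfolding d_def dT_var T_def by simp
  have dB: "d B = jconst (- lam / (4 * u)) * E4 * A" unfolding d_def dT_var T_def by simp
  have Kv: "K (jvarp x) = jconst (kap u v (Poly_Mapping.single x 1)) * jvarp x" for x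
    unfolding K_def dT_var ..
  have pb: "poisson_bracket br" using adm unfolding admissible_pb_def by blast
  have hom: "d (jvarp x) \<in> Jhom (mweight (Poly_Mapping.single x 1) + 2) (mindex (Poly_Mapping.single x 1))" for x
  proof (cases x)
    case vE4
    have "d E4 \<in> Jhom 6 0" unfolding dE4 by (rule Jhom_smul[OF gens_hom(2)])
    then show ?thesis using vE4 by simp
  next
    case vE6
    have "d E6 \<in> Jhom 8 0" unfolding dE6 power2_eq_square
      by (rule Jhom_smul[OF Jhom_mult[OF gens_hom(1) gens_hom(1)]]) simp_all
    then show ?thesis using vE6 by simp
  next
    case vA
    have "d A \<in> Jhom 0 1" unfolding dA by (rule Jhom_smul[OF gens_hom(4)])
    then show ?thesis using vA by simp
  next
    case vB
    have "d B \<in> Jhom 2 1" unfolding dB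
      by (rule Jhom_mult[OF Jhom_smul[OF gens_hom(1)] gens_hom(3)]) simp_all
    then show ?thesis using vB by simp
  qed
  have adm_d: "admissible_derivation d"
    unfolding admissible_derivation_def using dd hom_deriv[OF dd hom] by blast
  note gen = gen_family[OF u v_def dE4 dE6 dA dB]
  have phiFk: "phi K d (jvarp x) (jvarp y) = Fk d u v (jvarp x) (mweight (Poly_Mapping.single x 1)) (mindex (Poly_Mapping.single x 1))
        (jvarp y) (mweight (Poly_Mapping.single y 1)) (mindex (Poly_Mapping.single y 1))" for x y
    unfolding phi_def Fk_def Kv kap_def ..
  have famf: "br E4 E6 = jconst (-2) * E4^3 + jconst 2 * E6^2"
     "br A E4 = jconst (\<epsilon> + 2/3) * E6 * A + jconst \<gamma> * E4 * B"
     "br A E6 = jconst (3/2 * \<epsilon> + 1) * E4^2 * A + jconst (3/2 * \<gamma>) * E6 * B"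
     "br B E4 = jconst lam * E4^2 * A + jconst \<epsilon> * E6 * B"
     "br B E6 = jconst (3/2 * lam) * E4 * E6 * A + jconst (3/2 * \<epsilon>) * E4^2 * B"
     "br A B = jconst ((3/4 * \<epsilon> + 1/2) * lam) * E4 * A^2 - jconst (3/4 * \<epsilon> * \<gamma>) * B^2"
    using fam unfolding familyB_params_def by blast+
  have six: "br E4 E6 = phi K d E4 E6" "br A E4 = phi K d A E4" "br A E6 = phi K d A E6"
     "br B E4 = phi K d B E4" "br B E6 = phi K d B E6" "br A B = phi K d A B"
    using gen famf phiFk[of vE4 vE6] phiFk[of vA vE4] phiFk[of vA vE6] phiFk[of vB vE4]
      phiFk[of vB vE6] phiFk[of vA vB] by simp_all
  have V: "br (jvarp x) (jvarp y) = phi K d (jvarp x) (jvarp y)" for x y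
  proof -
    have rev: "br g f = phi K d g f" if "br f g = phi K d f g" for f g
      using that br_anti[OF pb, of g f] phi_anti[of K d g f] by simp
    have diag: "br f f = phi K d f f" for f
      using br_self[OF pb, of f] by (simp add: phi_def)
    show ?thesis
      by (cases x; cases y) (simp_all only: six diag rev[OF six(1)] rev[OF six(2)] rev[OF six(3)]
          rev[OF six(4)] rev[OF six(5)] rev[OF six(6)])
  qed
  have bp: "br f g = phi K d f g" for f g
    by (rule bider_unique[OF br_deriv[OF pb] phi_deriv[OF dK dd] br_anti[OF pb] phi_anti V])
  have "kappa_identity br d u v"
    unfolding kappa_identity_def
  proof (intro allI impI)
    fix k p l q f g assume f: "f \<in> Jhom k p" and g: "g \<in> Jhom l q"
    show "br f g = jconst (u * of_int k + v * of_nat p) * f * d g - jconst (u * of_int l + v * of_nat q) * g * d f"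
      unfolding bp phi_def euler_deriv[OF dK Kv f] euler_deriv[OF dK Kv g] ..
  qed
  then show ?thesis using adm_d dE4 dE6 dA dB unfolding v_def by blast
qed




lemma moreover_part:
  assumes adm: "admissible_pb br" and fam: "familyB_params br \<gamma> lam \<epsilon>"
    and ad: "admissible_derivation d" and kap: "kappa_identity br d u v"
  shows "u \<noteq> 0 \<and> v = -3 * \<epsilon> * u \<and>
        d E4 = jconst (- 1 / (3 * u)) * E6 \<and>
        d E6 = jconst (- 1 / (2 * u)) * E4^2 \<and>
        d A = jconst (- \<gamma> / (4 * u)) * B \<and>
        d B = jconst (- lam / (4 * u)) * E4 * A"
proof -
  obtain c e where u: "u \<noteq> 0" and dE4: "d E4 = jconst (- 1 / (3 * u)) * E6"
    and dE6: "d E6 = jconst (- 1 / (2 * u)) * E4^2" and dA: "d A = jconst c * B" and dB: "d B = jconst e * E4 * A"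
    using forward[OF adm ad kap] by blast
  have eq1: "Fk d u v A (-2) 1 E4 4 0 = jconst (\<epsilon> + 2/3) * E6 * A + jconst \<gamma> * E4 * B"
    using kappa_Fk[OF kap gens_hom(3,1)] fam unfolding familyB_params_def by simp
  have eq2: "Fk d u v B 0 1 E4 4 0 = jconst lam * E4^2 * A + jconst \<epsilon> * E6 * B"
    using kappa_Fk[OF kap gens_hom(4,1)] fam unfolding familyB_params_def by simp
  have h1: "(u * (-2) + v) * (- 1 / (3 * u)) = \<epsilon> + 2/3"
    using arg_cong[OF eq1, of "\<lambda>p. Poly_Mapping.lookup p (mon 0 1 1 0)"]
    unfolding Fk_def dE4 dA by (simp add: Xnorm lookup_add lookup_minus lookup_X algebra_simps)
  have h2: "- (u * 4 * c) = \<gamma>"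
    using arg_cong[OF eq1, of "\<lambda>p. Poly_Mapping.lookup p (mon 1 0 0 1)"]
    unfolding Fk_def dE4 dA by (simp add: Xnorm lookup_add lookup_minus lookup_X algebra_simps)
  have h3: "- (u * 4 * e) = lam"
    using arg_cong[OF eq2, of "\<lambda>p. Poly_Mapping.lookup p (mon 2 0 1 0)"]
    unfolding Fk_def dE4 dB by (simp add: Xnorm lookup_add lookup_minus lookup_X algebra_simps)
  have "v * 3 + \<epsilon> * (u * 9) = 0" using h1 u by (simp add: field_simps)
  then have "3 * (v + 3 * \<epsilon> * u) = 0" by (simp add: algebra_simps)
  then have "v + 3 * \<epsilon> * u = 0" by (metis mult_eq_0_iff zero_neq_numeral)
  then have "v = - (3 * \<epsilon> * u)" by (simp add: eq_neg_iff_add_eq_0)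
  then have "v = -3 * \<epsilon> * u" by simp
  moreover have "c = - \<gamma> / (4 * u)" using h2 u by (auto simp: field_simps)
  moreover have "e = - lam / (4 * u)" using h3 u by (auto simp: field_simps)
  ultimately show ?thesis using u dE4 dE6 dA dB by simp
qed

lemma cond1_famB:
  assumes adm: "admissible_pb br" and c1: "cond1 br" shows "familyB br"
proof -
  obtain d u v where ad: "admissible_derivation d" and kap: "kappa_identity br d u v"
    using c1 unfolding cond1_def by blast
  obtain c e where u: "u \<noteq> 0" and dE4: "d E4 = jconst (- 1 / (3 * u)) * E6"
    and dE6: "d E6 = jconst (- 1 / (2 * u)) * E4^2" and dA: "d A = jconst c * B" and dB: "d B = jconst e * E4 * A"
    using forward[OF adm ad kap] by blast
  define \<gamma> where "\<gamma> = - 4 * u * c"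
  define lam where "lam = - 4 * u * e"
  define \<epsilon> where "\<epsilon> = - v / (3 * u)"
  have v: "v = -3 * \<epsilon> * u" using u unfolding \<epsilon>_def by (simp add: field_simps)
  have dA': "d A = jconst (- \<gamma> / (4 * u)) * B" using u dA unfolding \<gamma>_def by simp
  have dB': "d B = jconst (- lam / (4 * u)) * E4 * A" using u dB unfolding lam_def by simp
  note gen = gen_family[OF u v dE4 dE6 dA' dB']
  have "familyB_params br \<gamma> lam \<epsilon>"
    unfolding familyB_params_def
    using gen kappa_Fk[OF kap gens_hom(1,2)] kappa_Fk[OF kap gens_hom(3,1)] kappa_Fk[OF kap gens_hom(3,2)]
      kappa_Fk[OF kap gens_hom(4,1)] kappa_Fk[OF kap gens_hom(4,2)] kappa_Fk[OF kap gens_hom(3,4)]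
    by simp
  then show ?thesis unfolding familyB_def by blast
qed

lemma famB_cond1:
  assumes adm: "admissible_pb br" and fb: "familyB br" shows "cond1 br"
proof -
  obtain \<gamma> lam \<epsilon> where fam: "familyB_params br \<gamma> lam \<epsilon>" using fb unfolding familyB_def by blast
  obtain d where ad: "admissible_derivation d" and dE4: "d E4 = jconst (- 1 / (3 * 1)) * E6"
    and kap: "kappa_identity br d 1 (-3 * \<epsilon> * 1)"
    using converse[OF adm fam, of 1] by auto
  have "d \<noteq> (\<lambda>_. 0)"
  proof
    assume "d = (\<lambda>_. 0)"
    then have "d E4 = 0" by simp
    then have "Poly_Mapping.lookup (jconst (- 1 / (3 * 1)) * E6) (mon 0 1 0 0) = 0" using dE4 by simp
    then show False by (simp add: Xnorm lookup_X)
  qed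
  then show ?thesis unfolding cond1_def using ad kap by blast
qed

theorem mainTheorem8:
  fixes br :: "jpoly \<Rightarrow> jpoly \<Rightarrow> jpoly"
  assumes "admissible_pb br"
  shows "(cond1 br \<longleftrightarrow> familyB br) \<and>
    (\<forall>\<gamma> lam \<epsilon> d u v. familyB_params br \<gamma> lam \<epsilon> \<longrightarrow>
        d \<noteq> (\<lambda>_. 0) \<longrightarrow> admissible_derivation d \<longrightarrow> kappa_identity br d u v \<longrightarrow>
        u \<noteq> 0 \<and> v = -3 * \<epsilon> * u \<and>
        d E4 = jconst (- 1 / (3 * u)) * E6 \<and>
        d E6 = jconst (- 1 / (2 * u)) * E4^2 \<and>
        d A = jconst (- \<gamma> / (4 * u)) * B \<and>
        d B = jconst (- lam / (4 * u)) * E4 * A) \<and>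
    (\<forall>\<gamma> lam \<epsilon> u. familyB_params br \<gamma> lam \<epsilon> \<longrightarrow> u \<noteq> 0 \<longrightarrow>
        (\<exists>d. admissible_derivation d \<and>
           d E4 = jconst (- 1 / (3 * u)) * E6 \<and>
           d E6 = jconst (- 1 / (2 * u)) * E4^2 \<and>
           d A = jconst (- \<gamma> / (4 * u)) * B \<and>
           d B = jconst (- lam / (4 * u)) * E4 * A \<and>
           kappa_identity br d u (-3 * \<epsilon> * u)))"
  using cond1_famB[OF assms] famB_cond1[OF assms] moreover_part[OF assms] converse[OF assms]
  by blast


end
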